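(* Let $p$ be a prime, $a,b\in\mathbb{Z}_p$, and $Q=Q_{a,b}(\mathbb{Z}_p)$. Then: (i) if $(a,b)=(0,0)$ and $p\ne3$, $Q$ has exponent $p$; (ii) if $(a,b)\ne(0,0)$ or $p=3$, $Q$ has exponent $p^2$; (iii) if $a=0$, then $N_\mu(Q)\cong\mathbb{Z}_p\times\mathbb{Z}_p$; (iv) if $a\ne0$, then $N_\mu(Q)\cong\mathbb{Z}_{p^2}$.
   Context: Identify $\mathbb{Z}_p$ with $\{0,\dots,p-1\}$. The overflow indicator is $(x,y)_p=1$ if $x+y\ge p$ as integers and $0$ otherwise. $Q_{a,b}(\mathbb{Z}_p)$ is $\mathbb{Z}_p^3$ with multiplication $(x_1,x_2,x_3)(y_1,y_2,y_3)=(x_1+y_1+(x_2+y_2)x_3y_3+a(x_2,y_2)_p+b(x_3,y_3)_p,\ x_2+y_2,\ x_3+y_3)$, a power-associative commutative loop. The exponent is the least $e\ge1$ with $u^e$ equal to the neutral element for all $u$. $N_\mu(Q)=\{y:(xy)z=x(yz)\ \forall x,z\}$, which here is a group. *)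

theory Defs
  imports "HOL-Algebra.Elementary_Groups" "HOL-Computational_Algebra.Primes"
begin

text \<open>Z_p is identified with {0,...,p-1} (natural numbers below p).\<close>

definition ovf :: "nat \<Rightarrow> nat \<Rightarrow> nat \<Rightarrow> nat" where
  "ovf p x y = (if x + y \<ge> p then 1 else 0)"

definition Qcar :: "nat \<Rightarrow> (nat \<times> nat \<times> nat) set" where
  "Qcar p = {(x1, x2, x3). x1 < p \<and> x2 < p \<and> x3 < p}"

definition Qmult :: "nat \<Rightarrow> nat \<Rightarrow> nat \<Rightarrow> nat \<times> nat \<times> nat \<Rightarrow> nat \<times> nat \<times> nat \<Rightarrow> nat \<times> nat \<times> nat" where
  "Qmult p a b x y = (case x of (x1, x2, x3) \<Rightarrow> case y of (y1, y2, y3) \<Rightarrow>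
     ((x1 + y1 + (x2 + y2) * x3 * y3 + a * ovf p x2 y2 + b * ovf p x3 y3) mod p,
      (x2 + y2) mod p, (x3 + y3) mod p))"

definition Qone :: "nat \<times> nat \<times> nat" where
  "Qone = (0, 0, 0)"

text \<open>Powers u^n = (...((1*u)*u)...)*u (the loop is power-associative).\<close>
primrec Qpow :: "nat \<Rightarrow> nat \<Rightarrow> nat \<Rightarrow> nat \<times> nat \<times> nat \<Rightarrow> nat \<Rightarrow> nat \<times> nat \<times> nat" where
  "Qpow p a b u 0 = Qone"
| "Qpow p a b u (Suc n) = Qmult p a b (Qpow p a b u n) u"

definition Qexponent :: "nat \<Rightarrow> nat \<Rightarrow> nat \<Rightarrow> nat" where
  "Qexponent p a b = (LEAST e. e \<ge> 1 \<and> (\<forall>u \<in> Qcar p. Qpow p a b u e = Qone))"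

definition Nmu :: "nat \<Rightarrow> nat \<Rightarrow> nat \<Rightarrow> (nat \<times> nat \<times> nat) set" where
  "Nmu p a b = {y \<in> Qcar p. \<forall>x \<in> Qcar p. \<forall>z \<in> Qcar p.
      Qmult p a b (Qmult p a b x y) z = Qmult p a b x (Qmult p a b y z)}"

definition Nmu_group :: "nat \<Rightarrow> nat \<Rightarrow> nat \<Rightarrow> (nat \<times> nat \<times> nat) monoid" where
  "Nmu_group p a b = \<lparr>carrier = Nmu p a b, monoid.mult = Qmult p a b, one = Qone\<rparr>"

end

theory Submission
  imports Defs "HOL-Number_Theory.Cong"
begin


definition T :: "nat \<Rightarrow> nat" where "T n = (\<Sum>k<n. k*(k+1))"

lemma T_Suc: "T (Suc n) = T n + n*(n+1)" by (simp add: T_def)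

lemma T_cube: "3 * T n + n = n^3"
proof (induction n)
  case 0 then show ?case by (simp add: T_def)
next
  case (Suc n) then show ?case by (simp add: T_Suc power3_eq_cube algebra_simps)
qed

lemma ovf_div: "x < p \<Longrightarrow> y < p \<Longrightarrow> ovf p x y = (x+y) div p"
proof -
  assume "x < p" "y < p"
  show ?thesis
  proof (cases "p \<le> x + y")
    case True
    have "(x+y) div p = Suc ((x+y-p) div p)" using True \<open>x<p\<close> by (simp add: le_div_geq)
    also have "(x+y-p) div p = 0" using \<open>x<p\<close> \<open>y<p\<close> by simp
    finally show ?thesis using True by (simp add: ovf_def)
  qed (simp add: ovf_def)
qed

lemma div_split: "(0::nat) < p \<Longrightarrow> (x + y) div p = x div p + (x mod p + y) div p"
proof -
  assume p: "0 < p"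
  have "x + y = (x mod p + y) + (x div p) * p" by simp
  then have "(x + y) div p = ((x mod p + y) + (x div p) * p) div p" by simp
  also have "\<dots> = (x mod p + y) div p + x div p" using p div_mult_self1[of p "x mod p + y" "x div p"] by simp
  finally show ?thesis by simp
qed

lemma Qpow_closed:
  assumes p: "0 < p" and u2: "u2 < p" and u3: "u3 < p"
  shows "Qpow p a b (u1,u2,u3) n =
    ((n*u1 + u2*u3*u3*T n + a*(n*u2 div p) + b*(n*u3 div p)) mod p, n*u2 mod p, n*u3 mod p)"
proof (induction n)
  case 0 then show ?case by (simp add: Qone_def T_def)
next
  case (Suc n)
  define A where "A = n*u1 + u2*u3*u3*T n + a*(n*u2 div p) + b*(n*u3 div p)"
  have c2: "ovf p (n*u2 mod p) u2 = (n*u2 mod p + u2) div p" using p u2 by (simp add: ovf_div)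
  have c3: "ovf p (n*u3 mod p) u3 = (n*u3 mod p + u3) div p" using p u3 by (simp add: ovf_div)
  have d2: "Suc n * u2 div p = n*u2 div p + (n*u2 mod p + u2) div p"
    using div_split[OF p, of "n*u2" u2] by (simp add: add.commute)
  have d3: "Suc n * u3 div p = n*u3 div p + (n*u3 mod p + u3) div p"
    using div_split[OF p, of "n*u3" u3] by (simp add: add.commute)
  have m2: "(n*u2 mod p + u2) mod p = Suc n * u2 mod p" by (simp add: mod_simps add.commute)
  have m3: "(n*u3 mod p + u3) mod p = Suc n * u3 mod p" by (simp add: mod_simps add.commute)
  have k1: "[n*u2 mod p + u2 = Suc n * u2] (mod p)" by (simp add: cong_def mod_simps add.commute)
  have k2: "[n*u3 mod p = n * u3] (mod p)" by (simp add: cong_def)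
  have k3: "[A mod p = A] (mod p)" by (simp add: cong_def)
  have k4: "[(n*u2 mod p + u2) * (n*u3 mod p) * u3 = Suc n * u2 * (n*u3) * u3] (mod p)"
    by (intro cong_mult k1 k2 cong_refl)
  have k5: "[A mod p + u1 + (n*u2 mod p + u2) * (n*u3 mod p) * u3 + a*((n*u2 mod p + u2) div p) + b*((n*u3 mod p + u3) div p)
     = A + u1 + Suc n * u2 * (n*u3) * u3 + a*((n*u2 mod p + u2) div p) + b*((n*u3 mod p + u3) div p)] (mod p)"
    by (intro cong_add k3 k4 cong_refl)
  have e: "A + u1 + Suc n * u2 * (n*u3) * u3 + a*((n*u2 mod p + u2) div p) + b*((n*u3 mod p + u3) div p)
     = Suc n*u1 + u2*u3*u3*T (Suc n) + a*(Suc n*u2 div p) + b*(Suc n*u3 div p)"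
    unfolding A_def d2 d3 T_Suc by (simp add: algebra_simps)
  show ?case
    using k5 unfolding e
    by (simp add: Suc.IH A_def[symmetric] Qmult_def c2 c3 m2 m3 cong_def)
qed


lemma ovf_0: "x < p \<Longrightarrow> ovf p x 0 = 0" by (simp add: ovf_def)
lemma ovf_0': "x < p \<Longrightarrow> ovf p 0 x = 0" by (simp add: ovf_def)

lemma nucleus_assoc:
  assumes p: "0 < p" and x: "(x1,x2,x3) \<in> Qcar p" and y: "y1 < p" "y2 < p" and z: "(z1,z2,z3) \<in> Qcar p"
  shows "Qmult p a b (Qmult p a b (x1,x2,x3) (y1,y2,0)) (z1,z2,z3) = Qmult p a b (x1,x2,x3) (Qmult p a b (y1,y2,0) (z1,z2,z3))"
proof -
  from x have x2: "x2 < p" and x3: "x3 < p" by (auto simp: Qcar_def)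
  from z have z2: "z2 < p" and z3: "z3 < p" by (auto simp: Qcar_def)
  have r1: "(x2+y2) mod p < p" "(y2+z2) mod p < p" using p by auto
  have ca: "ovf p x2 y2 + ovf p ((x2+y2) mod p) z2 = (x2+y2+z2) div p"
    using div_split[OF p, of "x2+y2" z2] by (simp add: ovf_div x2 y z2 r1)
  have cb: "ovf p y2 z2 + ovf p x2 ((y2+z2) mod p) = (x2+y2+z2) div p"
    using div_split[OF p, of "y2+z2" x2] by (simp add: ovf_div x2 y z2 r1 add.commute add.left_commute)
  define X where "X = x1+y1+z1 + (x2+y2+z2)*x3*z3 + a*((x2+y2+z2) div p) + b*ovf p x3 z3"
  have L: "[(x1 + y1 + a * ovf p x2 y2) mod p + z1 + ((x2 + y2) mod p + z2) * x3 * z3 + a * ovf p ((x2 + y2) mod p) z2 + b * ovf p x3 z3 = X] (mod p)"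
  proof -
    have "[(x1 + y1 + a * ovf p x2 y2) mod p + z1 + ((x2 + y2) mod p + z2) * x3 * z3 + a * ovf p ((x2 + y2) mod p) z2 + b * ovf p x3 z3
      = (x1 + y1 + a * ovf p x2 y2) + z1 + ((x2 + y2) + z2) * x3 * z3 + a * ovf p ((x2 + y2) mod p) z2 + b * ovf p x3 z3] (mod p)"
      by (intro cong_add cong_mult cong_refl) (simp_all add: cong_def)
    moreover have "(x1 + y1 + a * ovf p x2 y2) + z1 + ((x2 + y2) + z2) * x3 * z3 + a * ovf p ((x2 + y2) mod p) z2 + b * ovf p x3 z3 = X"
      unfolding X_def ca[symmetric] by (simp add: algebra_simps)
    ultimately show ?thesis by simp
  qed
  have R: "[x1 + (y1 + z1 + a * ovf p y2 z2) mod p + (x2 + (y2 + z2) mod p) * x3 * z3 + a * ovf p x2 ((y2 + z2) mod p) + b * ovf p x3 z3 = X] (mod p)"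
  proof -
    have "[x1 + (y1 + z1 + a * ovf p y2 z2) mod p + (x2 + (y2 + z2) mod p) * x3 * z3 + a * ovf p x2 ((y2 + z2) mod p) + b * ovf p x3 z3
      = x1 + (y1 + z1 + a * ovf p y2 z2) + (x2 + (y2 + z2)) * x3 * z3 + a * ovf p x2 ((y2 + z2) mod p) + b * ovf p x3 z3] (mod p)"
      by (intro cong_add cong_mult cong_refl) (simp_all add: cong_def)
    moreover have "x1 + (y1 + z1 + a * ovf p y2 z2) + (x2 + (y2 + z2)) * x3 * z3 + a * ovf p x2 ((y2 + z2) mod p) + b * ovf p x3 z3 = X"
      unfolding X_def cb[symmetric] by (simp add: algebra_simps)
    ultimately show ?thesis by simp
  qed
  have s2: "((x2 + y2) mod p + z2) mod p = (x2 + (y2 + z2) mod p) mod p" by (simp add: mod_simps add.assoc)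
  show ?thesis
    using L R unfolding cong_def
    by (simp add: Qmult_def ovf_0 ovf_0' x3 y z3 s2)
qed

lemma not_nucleus:
  assumes p: "1 < p" and y: "(y1,y2,y3) \<in> Qcar p" and y3: "y3 \<noteq> 0"
  shows "Qmult p a b (Qmult p a b (0,1,0) (y1,y2,y3)) (0,0,1) \<noteq> Qmult p a b (0,1,0) (Qmult p a b (y1,y2,y3) (0,0,1))"
proof
  assume eq: "Qmult p a b (Qmult p a b (0,1,0) (y1,y2,y3)) (0,0,1) = Qmult p a b (0,1,0) (Qmult p a b (y1,y2,y3) (0,0,1))"
  from y have y2: "y2 < p" and y3p: "y3 < p" by (auto simp: Qcar_def)
  have r: "(1+y2) mod p < p" using p by auto
  define X where "X = y1 + a * ovf p 1 y2 + y2*y3 + b * ovf p y3 1"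
  have L: "[(y1 + a * ovf p 1 y2) mod p + ((1 + y2) mod p) * y3 + b * ovf p y3 1 = X + y3] (mod p)"
  proof -
    have "[(y1 + a * ovf p 1 y2) mod p + ((1 + y2) mod p) * y3 + b * ovf p y3 1 = (y1 + a * ovf p 1 y2) + (1 + y2) * y3 + b * ovf p y3 1] (mod p)"
      by (intro cong_add cong_mult cong_refl) (simp_all add: cong_def)
    then show ?thesis by (simp add: X_def algebra_simps)
  qed
  have R: "[(y1 + y2 * y3 + b * ovf p y3 1) mod p + a * ovf p 1 y2 = X] (mod p)"
  proof -
    have "[(y1 + y2 * y3 + b * ovf p y3 1) mod p + a * ovf p 1 y2 = (y1 + y2 * y3 + b * ovf p y3 1) + a * ovf p 1 y2] (mod p)"
      by (intro cong_add cong_refl) (simp_all add: cong_def)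
    then show ?thesis by (simp add: X_def algebra_simps)
  qed
  from eq have "((y1 + a * ovf p 1 y2) mod p + ((1 + y2) mod p) * y3 + b * ovf p y3 1) mod p = ((y1 + y2 * y3 + b * ovf p y3 1) mod p + a * ovf p 1 y2) mod p"
    using p y2 y3p by (simp add: Qmult_def ovf_0 ovf_0' r)
  with L R have "[X + y3 = X + 0] (mod p)" unfolding cong_def by simp
  then have "[y3 = 0] (mod p)" by (simp only: cong_add_lcancel_nat)
  then show False using y3 y3p by (simp add: cong_def)
qed



lemma Nmu_char:
  assumes p: "1 < p"
  shows "Nmu p a b = {(x1,x2,x3). x1 < p \<and> x2 < p \<and> x3 = 0}"
proof (rule Set.set_eqI, rule iffI)
  fix y assume "y \<in> Nmu p a b"
  then obtain y1 y2 y3 where yy: "y = (y1,y2,y3)" and yc: "(y1,y2,y3) \<in> Qcar p"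
    and A: "\<forall>x \<in> Qcar p. \<forall>z \<in> Qcar p. Qmult p a b (Qmult p a b x y) z = Qmult p a b x (Qmult p a b y z)"
    unfolding Nmu_def by (cases y) auto
  have "y3 = 0"
  proof (rule ccontr)
    assume "y3 \<noteq> 0"
    moreover have "(0,1,0) \<in> Qcar p" "(0,0,1) \<in> Qcar p" using p by (auto simp: Qcar_def)
    ultimately show False using not_nucleus[OF p yc] A yy by blast
  qed
  then show "y \<in> {(x1,x2,x3). x1 < p \<and> x2 < p \<and> x3 = 0}" using yy yc by (auto simp: Qcar_def)
next
  fix y :: "nat \<times> nat \<times> nat" assume "y \<in> {(x1,x2,x3). x1 < p \<and> x2 < p \<and> x3 = 0}"
  then obtain y1 y2 where yy: "y = (y1,y2,0)" and y: "y1 < p" "y2 < p" by auto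
  have "\<forall>x \<in> Qcar p. \<forall>z \<in> Qcar p. Qmult p a b (Qmult p a b x y) z = Qmult p a b x (Qmult p a b y z)"
    using nucleus_assoc[of p _ _ _ y1 y2] p y yy by fastforce
  then show "y \<in> Nmu p a b" using yy y p by (auto simp: Nmu_def Qcar_def)
qed

lemma Nmu_mult:
  assumes p: "0 < p" and "x2 < p" "y2 < p"
  shows "Qmult p a b (x1,x2,0) (y1,y2,0) = ((x1+y1+a*((x2+y2) div p)) mod p, (x2+y2) mod p, 0)"
  using assms by (simp add: Qmult_def ovf_div)

lemma mod_sq: "(r::nat) < p \<Longrightarrow> (r + p*k) mod (p*p) = r + p*(k mod p)"
proof -
  assume r: "r < p"
  have "r + p*k = (r + p*(k mod p)) + (k div p) * (p*p)"
  proof -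
    have "p*k = p*(k div p * p + k mod p)" by simp
    also have "\<dots> = p*(k mod p) + (k div p)*(p*p)" by (simp only: algebra_simps)
    finally show ?thesis by simp
  qed
  moreover have "r + p*(k mod p) < p*p"
  proof -
    have "k mod p < p" using r by simp
    then have "k mod p + 1 \<le> p" by simp
    then have "p*(k mod p + 1) \<le> p*p" by (rule mult_le_mono2)
    then show ?thesis using r by (simp add: algebra_simps)
  qed
  ultimately show ?thesis by (metis mod_mult_self1 mod_less)
qed



lemma T_dvd1:
  assumes p: "prime (p::nat)" and p3: "p \<noteq> 3" shows "p dvd T (k*p)"
proof -
  have e: "3 * T (k*p) + k*p = (k*p)^3" by (rule T_cube)
  have "p dvd (k*p)^3" by (simp add: power3_eq_cube)
  then have "p dvd 3 * T (k*p) + k*p" by (simp only: e)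
  then have "p dvd 3 * T (k*p)" by (simp add: dvd_add_left_iff)
  then have "p dvd 3 \<or> p dvd T (k*p)" using p by (simp add: prime_dvd_mult_iff)
  moreover have "\<not> p dvd 3"
  proof
    assume "p dvd 3"
    then have "p \<le> 3" by (simp add: dvd_imp_le)
    moreover have "p \<ge> 2" using p by (simp add: prime_ge_2_nat)
    ultimately have "p = 2" using p3 by linarith
    with \<open>p dvd 3\<close> show False by simp
  qed
  ultimately show ?thesis by blast
qed

lemma T_dvd2:
  assumes p: "prime (p::nat)" shows "p dvd T (p^2)"
proof (rule ccontr)
  assume nd: "\<not> p dvd T (p^2)"
  have e: "3 * T (p^2) + p^2 = (p^2)^3" by (rule T_cube)
  have "(p^2)^3 = p^2 * (p^2 * p^2)" by (simp only: power3_eq_cube mult.assoc)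
  then have "p^2 dvd (p^2)^3" by (simp only: dvd_triv_left)
  then have "p^2 dvd 3 * T (p^2) + p^2" by (simp only: e)
  then have d: "p^2 dvd 3 * T (p^2)" by (simp add: dvd_add_left_iff)
  have "coprime p (T (p^2))" using p nd by (simp add: prime_imp_coprime)
  then have "coprime (p^2) (T (p^2))" by simp
  with d have "p^2 dvd 3" by (simp add: coprime_dvd_mult_left_iff)
  then have "p^2 \<le> 3" by (simp add: dvd_imp_le)
  moreover have "p^2 \<ge> 4"
  proof -
    have "p \<ge> 2" using p by (simp add: prime_ge_2_nat)
    then have "p*p \<ge> 2*2" using mult_le_mono[of 2 p 2 p] by simp
    then show ?thesis by (simp add: power2_eq_square)
  qed
  ultimately show False by simp
qed

lemma pow_p2:
  assumes p: "prime p" and u: "u \<in> Qcar p"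
  shows "Qpow p a b u (p^2) = Qone"
proof -
  obtain u1 u2 u3 where uu: "u = (u1,u2,u3)" and c: "u2 < p" "u3 < p" using u by (auto simp: Qcar_def)
  have p0: "0 < p" using p prime_gt_0_nat by blast
  have d1: "p^2*u2 div p = p*u2" "p^2*u3 div p = p*u3" using p0 by (simp_all add: power2_eq_square)
  have "p dvd p^2*u1 + u2*u3*u3*T (p^2) + a*(p*u2) + b*(p*u3)"
    using T_dvd2[OF p] by (simp add: power2_eq_square)
  then show ?thesis unfolding uu using c p0
    by (simp add: Qpow_closed d1 Qone_def power2_eq_square)
qed

lemma pow_p:
  assumes p: "prime p" and p3: "p \<noteq> 3" and u: "u \<in> Qcar p"
  shows "Qpow p 0 0 u p = Qone"
proof -
  obtain u1 u2 u3 where uu: "u = (u1,u2,u3)" and c: "u2 < p" "u3 < p" using u by (auto simp: Qcar_def)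
  have p0: "0 < p" using p prime_gt_0_nat by blast
  have z: "(u2*u3*u3*T p) mod p = 0"
    using T_dvd1[OF p p3, of 1] by (simp add: mod_eq_0_iff_dvd)
  then show ?thesis unfolding uu using c p0
    by (simp add: Qpow_closed Qone_def z)
qed

lemma pow_010: "1 < p \<Longrightarrow> Qpow p a b (0,1,0) e = ((a*(e div p)) mod p, e mod p, 0)"
  by (simp add: Qpow_closed)
lemma pow_001: "1 < p \<Longrightarrow> Qpow p a b (0,0,1) e = ((b*(e div p)) mod p, 0, e mod p)"
  by (simp add: Qpow_closed)
lemma pow_011: "1 < p \<Longrightarrow> Qpow p a b (0,1,1) e = ((T e + a*(e div p) + b*(e div p)) mod p, e mod p, e mod p)"
  by (simp add: Qpow_closed)



lemma exp_p:
  assumes p: "prime p" and p3: "p \<noteq> 3"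
  shows "Qexponent p 0 0 = p"
  unfolding Qexponent_def
proof (rule Least_equality)
  have p1: "1 < p" using p prime_gt_1_nat by blast
  show "1 \<le> p \<and> (\<forall>u\<in>Qcar p. Qpow p 0 0 u p = Qone)" using p1 pow_p[OF p p3] by auto
  fix e assume e: "1 \<le> e \<and> (\<forall>u\<in>Qcar p. Qpow p 0 0 u e = Qone)"
  have "(0,1,0) \<in> Qcar p" using p1 by (simp add: Qcar_def)
  with e have "Qpow p 0 0 (0,1,0) e = Qone" by blast
  then have "e mod p = 0" unfolding pow_010[OF p1] Qone_def by simp
  then show "p \<le> e" using e by (metis dvd_imp_le mod_0_imp_dvd not_one_le_zero neq0_conv)
qed

lemma T3: "T 3 = 8" by (simp add: T_def numeral_eq_Suc lessThan_Suc)
lemma T6: "T 6 = 70" by (simp add: T_def numeral_eq_Suc lessThan_Suc)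

lemma exp_p2:
  assumes p: "prime p" and a: "a < p" and b: "b < p" and h: "a \<noteq> 0 \<or> b \<noteq> 0 \<or> p = 3"
  shows "Qexponent p a b = p^2"
  unfolding Qexponent_def
proof (rule Least_equality)
  have p1: "1 < p" using p prime_gt_1_nat by blast
  show "1 \<le> p^2 \<and> (\<forall>u\<in>Qcar p. Qpow p a b u (p^2) = Qone)" using p1 pow_p2[OF p] by auto
  fix e assume e: "1 \<le> e \<and> (\<forall>u\<in>Qcar p. Qpow p a b u e = Qone)"
  show "p^2 \<le> e"
  proof (rule ccontr)
    assume lt: "\<not> p^2 \<le> e"
    have c: "(0,1,0) \<in> Qcar p" "(0,0,1) \<in> Qcar p" "(0,1,1) \<in> Qcar p" using p1 by (auto simp: Qcar_def)
    with e have q1: "Qpow p a b (0,1,0) e = Qone" and q2: "Qpow p a b (0,0,1) e = Qone"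
      and q3: "Qpow p a b (0,1,1) e = Qone" by blast+
    from q1 have em: "e mod p = 0" and ea: "a*(e div p) mod p = 0" unfolding pow_010[OF p1] Qone_def by simp_all
    from q2 have eb: "b*(e div p) mod p = 0" unfolding pow_001[OF p1] Qone_def by simp
    define k where "k = e div p"
    have ek: "e = p*k" using em k_def by (metis mult_div_mod_eq add_0_right)
    have k1: "k \<noteq> 0" using ek e by auto
    have kp: "k < p"
    proof (rule ccontr)
      assume "\<not> k < p"
      then have "p*p \<le> p*k" by simp
      then show False using lt ek by (simp add: power2_eq_square)
    qed
    have nk: "\<not> p dvd k" using k1 kp by (auto dest: dvd_imp_le)
    have a0: "a = 0"
    proof (rule ccontr)
      assume "a \<noteq> 0"
      then have "\<not> p dvd a" using a by (auto dest: dvd_imp_le)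
      with nk p have "\<not> p dvd a*k" by (simp add: prime_dvd_mult_iff)
      with ea show False unfolding k_def by (simp add: mod_eq_0_iff_dvd)
    qed
    have b0: "b = 0"
    proof (rule ccontr)
      assume "b \<noteq> 0"
      then have "\<not> p dvd b" using b by (auto dest: dvd_imp_le)
      with nk p have "\<not> p dvd b*k" by (simp add: prime_dvd_mult_iff)
      with eb show False unfolding k_def by (simp add: mod_eq_0_iff_dvd)
    qed
    have p3: "p = 3" using h a0 b0 by simp
    from q3 have "T e mod p = 0" using a0 b0 unfolding pow_011[OF p1] Qone_def by simp
    moreover have "k = 1 \<or> k = 2" using k1 kp p3 by auto
    ultimately show False using ek p3 T3 T6 by auto
  qed
qed



lemma lt_sq: "(r::nat) < p \<Longrightarrow> k < p \<Longrightarrow> r + p*k < p*p"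
proof -
  assume r: "r < p" and k: "k < p"
  then have "k + 1 \<le> p" by simp
  then have "p*(k + 1) \<le> p*p" by (rule mult_le_mono2)
  then show ?thesis using r by (simp add: algebra_simps)
qed

lemma carrier_Nmu_group: "1 < p \<Longrightarrow> carrier (Nmu_group p a b) = {(x1,x2,x3). x1 < p \<and> x2 < p \<and> x3 = 0}"
  by (simp add: Nmu_group_def Nmu_char)

lemma iso0:
  assumes p: "prime p"
  shows "Nmu_group p 0 b \<cong> integer_mod_group p \<times>\<times> integer_mod_group p"
proof -
  have p1: "1 < p" using p prime_gt_1_nat by blast
  define h where "h = (\<lambda>(x1::nat,x2::nat,x3::nat). (int x1, int x2))"
  have cG: "carrier (integer_mod_group p \<times>\<times> integer_mod_group p) = {0..<int p} \<times> {0..<int p}"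
    using p1 by (simp add: DirProd_def carrier_integer_mod_group)
  have hom: "h \<in> hom (Nmu_group p 0 b) (integer_mod_group p \<times>\<times> integer_mod_group p)"
  proof (rule homI)
    fix x assume "x \<in> carrier (Nmu_group p 0 b)"
    then show "h x \<in> carrier (integer_mod_group p \<times>\<times> integer_mod_group p)"
      using p1 by (auto simp: carrier_Nmu_group cG h_def carrier_integer_mod_group)
  next
    fix x y assume x: "x \<in> carrier (Nmu_group p 0 b)" and y: "y \<in> carrier (Nmu_group p 0 b)"
    then obtain x1 x2 y1 y2 where xx: "x = (x1,x2,0)" "x2 < p" and yy: "y = (y1,y2,0)" "y2 < p"
      using p1 by (auto simp: carrier_Nmu_group)
    show "h (x \<otimes>\<^bsub>Nmu_group p 0 b\<^esub> y) = h x \<otimes>\<^bsub>integer_mod_group p \<times>\<times> integer_mod_group p\<^esub> h y"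
      using p1 xx yy by (simp add: Nmu_group_def Nmu_mult DirProd_def h_def of_nat_mod)
  qed
  have bij: "bij_betw h (carrier (Nmu_group p 0 b)) (carrier (integer_mod_group p \<times>\<times> integer_mod_group p))"
    unfolding cG carrier_Nmu_group[OF p1]
    by (rule bij_betw_byWitness[where f' = "\<lambda>(i,j). (nat i, nat j, 0)"]) (auto simp: h_def)
  show ?thesis using hom bij by (auto simp: is_iso_def iso_def)
qed


lemma iso1:
  assumes p: "prime p" and a: "0 < a" "a < p"
  shows "Nmu_group p a b \<cong> integer_mod_group (p^2)"
proof -
  have p1: "1 < p" using p prime_gt_1_nat by blast
  have p0: "0 < p" using p1 by simp
  have "\<not> p dvd a" using a by (auto dest: dvd_imp_le)
  then have "coprime p a" using p by (simp add: prime_imp_coprime)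
  then have "coprime a p" by (simp add: coprime_commute)
  then obtain a' where aa: "[a * a' = Suc 0] (mod p)" using cong_solve_coprime_nat by blast
  define H where "H = (\<lambda>(x1::nat,x2::nat,x3::nat). x2 + p*((x1*a') mod p))"
  define h where "h = (\<lambda>x. int (H x))"
  have cG: "carrier (integer_mod_group (p^2)) = {0..<int (p^2)}"
    using p1 by (simp add: carrier_integer_mod_group)
  have Hlt: "H (x1,x2,0) < p*p" if "x2 < p" for x1 x2
    using lt_sq[OF that, of "(x1*a') mod p"] p0 by (simp add: H_def)
  have hom: "h \<in> hom (Nmu_group p a b) (integer_mod_group (p^2))"
  proof (rule homI)
    fix x assume "x \<in> carrier (Nmu_group p a b)"
    then obtain x1 x2 where xx: "x = (x1,x2,0)" "x2 < p" using p1 by (auto simp: carrier_Nmu_group)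
    then have "H x < p^2" using Hlt by (simp add: power2_eq_square)
    then have "int (H x) < int (p^2)" by linarith
    then show "h x \<in> carrier (integer_mod_group (p^2))" unfolding cG h_def by simp
  next
    fix x y assume x: "x \<in> carrier (Nmu_group p a b)" and y: "y \<in> carrier (Nmu_group p a b)"
    then obtain x1 x2 y1 y2 where xx: "x = (x1,x2,0)" "x2 < p" and yy: "y = (y1,y2,0)" "y2 < p"
      using p1 by (auto simp: carrier_Nmu_group)
    define c where "c = (x2+y2) div p"
    define m where "m = (x1*a') mod p"
    define m' where "m' = (y1*a') mod p"
    have k1: "[(x1+y1+a*c) * a' = c + m + m'] (mod p)"
    proof -
      have "(x1+y1+a*c) * a' = x1*a' + y1*a' + c*(a*a')" by (simp add: algebra_simps)
      moreover have "[x1*a' + y1*a' + c*(a*a') = m + m' + c*1] (mod p)"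
        unfolding m_def m'_def by (intro cong_add cong_mult cong_refl) (simp_all add: cong_def aa[unfolded cong_def])
      ultimately show ?thesis by (simp add: algebra_simps)
    qed
    have e1: "((x1+y1+a*c) mod p * a') mod p = (c + m + m') mod p"
      using k1 by (simp add: cong_def mod_simps)
    have e2: "H x + H y = (x2+y2) mod p + p*(c+m+m')"
    proof -
      have "x2 + y2 = (x2+y2) mod p + p*c" unfolding c_def by simp
      then show ?thesis using xx yy by (simp add: H_def m_def m'_def algebra_simps)
    qed
    have "h (x \<otimes>\<^bsub>Nmu_group p a b\<^esub> y) = int ((x2+y2) mod p + p*((c+m+m') mod p))"
      using p0 xx yy by (simp add: Nmu_group_def Nmu_mult h_def H_def c_def[symmetric] e1)
    also have "\<dots> = int ((H x + H y) mod (p*p))"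
      unfolding e2 using p0 by (simp add: mod_sq)
    also have "\<dots> = h x \<otimes>\<^bsub>integer_mod_group (p^2)\<^esub> h y"
      by (simp add: h_def of_nat_mod power2_eq_square)
    finally show "h (x \<otimes>\<^bsub>Nmu_group p a b\<^esub> y) = h x \<otimes>\<^bsub>integer_mod_group (p^2)\<^esub> h y" .
  qed
  define g where "g = (\<lambda>n::int. ((a*(nat n div p)) mod p, nat n mod p, 0::nat))"
  have gh: "g (h x) = x" if xc: "x \<in> carrier (Nmu_group p a b)" for x
  proof -
    obtain x1 x2 where xx: "x = (x1,x2,0)" "x1 < p" "x2 < p" using xc p1 by (auto simp: carrier_Nmu_group)
    have d: "H x div p = (x1*a') mod p" "H x mod p = x2" using xx p0 by (simp_all add: H_def)
    have "[a * ((x1*a') mod p) = x1 * (a*a')] (mod p)" by (simp add: cong_def mod_simps algebra_simps)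
    also have "[x1 * (a*a') = x1 * 1] (mod p)" by (intro cong_mult cong_refl) (simp add: aa)
    finally have "a * ((x1*a') mod p) mod p = x1" using xx by (simp add: cong_def)
    then show ?thesis using xx d by (simp add: g_def h_def)
  qed
  have hg: "h (g n) = n" if nc: "n \<in> carrier (integer_mod_group (p^2))" for n
  proof -
    define N where "N = nat n"
    have nn: "0 \<le> n" "n < int p * int p" using nc cG by (auto simp: power2_eq_square)
    then have n0: "n = int N" and N: "N < p*p" unfolding N_def by (simp_all add: nat_less_iff)
    have Nd: "N div p < p" using N p0 by (simp add: div_less_iff_less_mult)
    have "[(a*(N div p)) mod p * a' = (N div p) * (a*a')] (mod p)" by (simp add: cong_def mod_simps algebra_simps)
    also have "[(N div p) * (a*a') = (N div p) * 1] (mod p)" by (intro cong_mult cong_refl) (simp add: aa)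
    finally have "((a*(N div p)) mod p * a') mod p = N div p" using Nd by (simp add: cong_def)
    then have "H (g n) = N mod p + p*(N div p)" by (simp add: g_def H_def N_def[symmetric])
    then show ?thesis by (simp add: h_def n0)
  qed
  have gc: "g n \<in> carrier (Nmu_group p a b)" for n
    using p0 p1 by (simp add: g_def carrier_Nmu_group)
  have hc: "h x \<in> carrier (integer_mod_group (p^2))" if "x \<in> carrier (Nmu_group p a b)" for x
    using hom that by (simp add: hom_def Pi_iff)
  have bij: "bij_betw h (carrier (Nmu_group p a b)) (carrier (integer_mod_group (p^2)))"
    by (rule bij_betw_byWitness[where f' = g]) (use gh hg gc hc in auto)
  show ?thesis using hom bij by (auto simp: is_iso_def iso_def)
qed


theorem lemma5p5:
  fixes p a b :: nat
  assumes "prime p" and "a < p" and "b < p"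
  shows "((a = 0 \<and> b = 0) \<and> p \<noteq> 3 \<longrightarrow> Qexponent p a b = p)
       \<and> ((a \<noteq> 0 \<or> b \<noteq> 0) \<or> p = 3 \<longrightarrow> Qexponent p a b = p ^ 2)
       \<and> (a = 0 \<longrightarrow> Nmu_group p a b \<cong> integer_mod_group p \<times>\<times> integer_mod_group p)
       \<and> (a \<noteq> 0 \<longrightarrow> Nmu_group p a b \<cong> integer_mod_group (p ^ 2))"
  using exp_p[OF assms(1)] exp_p2[OF assms] iso0[OF assms(1)] iso1[OF assms(1) _ assms(2)]
  by auto

end
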